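(* Let $V$ be an $\mathcal{H}$-module vertex algebra and let $W=\bigoplus_{n\in\mathbb{Z}}W_n$ be a $(V,\mathcal{H})$-module. Then every $f\in\mathrm{Hom}_{(V,\mathcal{H})}(V,W)$ satisfies $f(V_n)\subset W_n$ for all $n\in\mathbb{Z}$.
   Context: Throughout, $\mathbb{F}$ is an algebraically closed field of odd prime characteristic $p$; vertex algebras and modules are over $\mathbb{F}$. Every vertex algebra $V$ is a module for the bialgebra $\mathcal{B}$ with basis $\{\mathcal{D}^{(n)}\}_{n\in\mathbb{N}}$, $\mathcal{D}^{(m)}\mathcal{D}^{(n)}=\binom{m+n}{n}\mathcal{D}^{(m+n)}$, via $\mathcal{D}^{(n)}v=v_{-n-1}\mathbf{1}$. $\mathcal{H}$: let $\mathfrak{sl}_2$ over $\mathbb{C}$ have basis $L_{-1},L_0,L_1$ with $[L_1,L_{-1}]=2L_0$, $[L_0,L_{\pm1}]=\mp L_{\pm1}$; put $L_{\pm1}^{(n)}=L_{\pm1}^n/n!$, $L_0^{(n)}=\binom{-2L_0}{n}$ in $U(\mathfrak{sl}_2)$; $U(\mathfrak{sl}_2)_{\mathbb{Z}}$ is the $\mathbb{Z}$-span of the $L_{-1}^{(i)}L_0^{(j)}L_1^{(k)}$, and $\mathcal{H}=\mathbb{F}\otimes_{\mathbb{Z}}U(\mathfrak{sl}_2)_{\mathbb{Z}}$. $e^{zL_{\pm1}}=\sum_{n\ge0}z^nL_{\pm1}^{(n)}$. For $v$ homogeneous of degree $n$, $f(z)^{\deg}v:=f(z)^nv$, extended linearly.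 A $\mathbb{Z}$-graded vertex algebra: $V=\bigoplus V_n$, $\mathbf{1}\in V_0$, $u_rV_n\subset V_{m+n-r-1}$ for $u\in V_m$. A $\mathbb{Z}$-graded weight $\mathcal{H}$-module: $W=\bigoplus W_n$ with $\mathcal{H}$-action, $L_{\pm1}^{(r)}W_n\subset W_{n\mp r}$, $L_0^{(r)}|_{W_n}=\binom{-2n}{r}$. An $\mathcal{H}$-module vertex algebra: a $\mathbb{Z}$-graded vertex algebra $V$ which is a $\mathbb{Z}$-graded weight $\mathcal{H}$-module with $L_{-1}^{(n)}=\mathcal{D}^{(n)}$, such that $V_n=0$ for $n\ll0$, $L_1^{(n)}\mathbf{1}=\delta_{n,0}\mathbf{1}$, and $e^{zL_1}Y(v,z_0)e^{-zL_1}=Y\bigl(e^{z(1-zz_0)L_1}(1-zz_0)^{-2\deg}v,z_0/(1-zz_0)\bigr)$ for $v\in V$. A $(V,\mathcal{H})$-module: a $\mathbb{Z}$-graded weight $\mathcal{H}$-module $W$ which is a $\mathbb{Z}$-graded $V$-module ($v_mW_n\subset W_{k+n-m-1}$ for $v\in V_k$) satisfying $e^{zL_{-1}}Y_W(v,x)e^{-zL_{-1}}=Y_W(e^{zL_{-1}}v,x)$ and $e^{zL_1}Y_W(v,z_0)e^{-zL_1}=Y_W\bigl(e^{z(1-zz_0)L_1}(1-zz_0)^{-2\deg}v,z_0/(1-zz_0)\bigr)$. $\mathrm{Hom}_{(V,\mathcal{H})}(V,W)$ is the space of linear maps that are both $V$-module and $\mathcal{H}$-module homomorphisms. *)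

theory Defs
  imports "HOL-Computational_Algebra.Polynomial"
begin

text \<open>The mode v_n u of a vertex
operator Y(v,z) = sum_n v_n z^(-n-1) is written Y v n u.\<close>

definition alg_closed_field :: "'k::field itself \<Rightarrow> bool" where
  "alg_closed_field _ \<longleftrightarrow> (\<forall>q::'k poly. degree q \<ge> 1 \<longrightarrow> (\<exists>x. poly q x = 0))"

definition ibinom :: "int \<Rightarrow> nat \<Rightarrow> int" where
  "ibinom a k = (\<Prod>i<k. a - int i) div fact k"

definition fsum :: "(nat \<Rightarrow> 'a::comm_monoid_add) \<Rightarrow> 'a" where
  "fsum f = sum f {i. f i \<noteq> 0}"

definition graded_space :: "('k::field \<Rightarrow> 'x::ab_group_add \<Rightarrow> 'x) \<Rightarrow> (int \<Rightarrow> 'x set) \<Rightarrow> bool" where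
  "graded_space s G \<longleftrightarrow> vector_space s \<and> (\<forall>n. module.subspace s (G n)) \<and>
     (\<forall>x. \<exists>!c. finite {n. c n \<noteq> 0} \<and> (\<forall>n. c n \<in> G n) \<and> x = sum c {n. c n \<noteq> 0})"

text \<open>Borcherds (Jacobi) identity in modes, for u v in V and w in the module
(YW = Y for V itself).\<close>
definition borcherds ::
  "('k::field \<Rightarrow> 'w::ab_group_add \<Rightarrow> 'w) \<Rightarrow> ('v \<Rightarrow> int \<Rightarrow> 'v \<Rightarrow> 'v) \<Rightarrow> ('v \<Rightarrow> int \<Rightarrow> 'w \<Rightarrow> 'w)
    \<Rightarrow> 'v \<Rightarrow> 'v \<Rightarrow> 'w \<Rightarrow> int \<Rightarrow> int \<Rightarrow> int \<Rightarrow> bool" where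
  "borcherds s Y YW u v w m n r \<longleftrightarrow>
     fsum (\<lambda>i. s (of_int (ibinom (m::int) i)) (YW (Y u (r + int i) v) (m + (n::int) - int i) w)) =
     fsum (\<lambda>i. s (of_int ((-1::int)^i * (ibinom (r::int) i))) (YW u (m + r - int i) (YW v (n + int i) w)))
     - s (if even r then 1 else -1)
         (fsum (\<lambda>i. s (of_int ((-1::int)^i * (ibinom r i))) (YW v (n + r - int i) (YW u (m + int i) w))))"

definition vertex_algebra :: "('k::field \<Rightarrow> 'v::ab_group_add \<Rightarrow> 'v) \<Rightarrow> ('v \<Rightarrow> int \<Rightarrow> 'v \<Rightarrow> 'v) \<Rightarrow> 'v \<Rightarrow> bool" where
  "vertex_algebra s Y one \<longleftrightarrow> vector_space s \<and>
     (\<forall>u n. Vector_Spaces.linear s s (Y u n)) \<and> (\<forall>n x. Vector_Spaces.linear s s (\<lambda>u. Y u n x)) \<and>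
     (\<forall>u v. \<exists>N. \<forall>n\<ge>N. Y u n v = 0) \<and>
     (\<forall>v n. Y one n v = (if n = -1 then v else 0)) \<and>
     (\<forall>v. Y v (-1) one = v \<and> (\<forall>n\<ge>0. Y v n one = 0)) \<and>
     (\<forall>u v w m n r. borcherds s Y Y u v w m n r)"

definition graded_vertex_algebra ::
  "('k::field \<Rightarrow> 'v::ab_group_add \<Rightarrow> 'v) \<Rightarrow> (int \<Rightarrow> 'v set) \<Rightarrow> ('v \<Rightarrow> int \<Rightarrow> 'v \<Rightarrow> 'v) \<Rightarrow> 'v \<Rightarrow> bool" where
  "graded_vertex_algebra s G Y one \<longleftrightarrow> vertex_algebra s Y one \<and> graded_space s G \<and> one \<in> G 0 \<and>
     (\<forall>m n u x r. u \<in> G m \<longrightarrow> x \<in> G n \<longrightarrow> Y u r x \<in> G (m + n - r - 1))"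

text \<open>Lm r, Lz r, Lp r are the actions of the generators
L_{-1}^{(r)}, L_0^{(r)}, L_1^{(r)} of H = F (x) U(sl2)_Z. With e = L_1, f = -L_{-1},
h = -2 L_0 (a standard sl2-triple, L_0^{(r)} = binom(h,r)), the conditions below are the
defining relations of the Kostant Z-form on weight modules: divided power relations and
e^(a) f^(b) = sum_k f^(b-k) binom(h-a-b+2k,k) e^(a-k); on W_n the weight condition forces
binom(h-a-b+2k,k) e^(a-k) = binom(-2n+a-b,k) e^(a-k).\<close>
definition weight_H_module ::
  "('k::field \<Rightarrow> 'x::ab_group_add \<Rightarrow> 'x) \<Rightarrow> (int \<Rightarrow> 'x set)
    \<Rightarrow> (nat \<Rightarrow> 'x \<Rightarrow> 'x) \<Rightarrow> (nat \<Rightarrow> 'x \<Rightarrow> 'x) \<Rightarrow> (nat \<Rightarrow> 'x \<Rightarrow> 'x) \<Rightarrow> bool" where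
  "weight_H_module s G Lm Lz Lp \<longleftrightarrow> graded_space s G \<and>
     (\<forall>r. Vector_Spaces.linear s s (Lm r) \<and> Vector_Spaces.linear s s (Lz r) \<and> Vector_Spaces.linear s s (Lp r)) \<and>
     (\<forall>r n x. x \<in> G n \<longrightarrow> Lm r x \<in> G (n + int r) \<and> Lp r x \<in> G (n - int r) \<and>
                Lz r x = s (of_int (ibinom (- 2 * (n::int)) r)) x) \<and>
     (\<forall>x. Lm 0 x = x \<and> Lp 0 x = x) \<and>
     (\<forall>a b x. Lm a (Lm b x) = s (of_nat ((a + b) choose a)) (Lm (a + b) x) \<and>
              Lp a (Lp b x) = s (of_nat ((a + b) choose a)) (Lp (a + b) x)) \<and>
     (\<forall>a b n x. x \<in> G n \<longrightarrow>
        Lp a (Lm b x) = (\<Sum>k\<le>min a b. s (of_int ((-1::int)^k * (ibinom (- 2 * (n::int) + int a - int b) k)))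
                                          (Lm (b - k) (Lp (a - k) x))))"

text \<open>Coefficient of z^N z0^(-M-1) in
  e^{z L_1} Y(v,z0) e^{-z L_1} = Y(e^{z(1-z z0)L_1}(1-z z0)^{-2 deg} v, z0/(1-z z0)),
for v homogeneous of degree k (the general case follows by linearity).\<close>
definition conj_L1 ::
  "('k::field \<Rightarrow> 'w::ab_group_add \<Rightarrow> 'w) \<Rightarrow> (int \<Rightarrow> 'v set) \<Rightarrow> (nat \<Rightarrow> 'v \<Rightarrow> 'v)
    \<Rightarrow> ('v \<Rightarrow> int \<Rightarrow> 'w \<Rightarrow> 'w) \<Rightarrow> (nat \<Rightarrow> 'w \<Rightarrow> 'w) \<Rightarrow> bool" where
  "conj_L1 sW GV LpV YW LpW \<longleftrightarrow>
     (\<forall>k v N M x. v \<in> GV k \<longrightarrow>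
        (\<Sum>a\<le>N. sW (of_int ((-1::int)^(N - a))) (LpW a (YW v M (LpW (N - a) x)))) =
        (\<Sum>i\<le>N. sW (of_int ((-1::int)^i * (ibinom (int N + (M::int) - 2 * (k::int) + 1) i))) (YW (LpV (N - i) v) (M + int i) x)))"

text \<open>Coefficient of z^N x^(-M-1) in e^{z L_{-1}} Y_W(v,x) e^{-z L_{-1}} = Y_W(e^{z L_{-1}} v, x).\<close>
definition conj_Lm ::
  "('k::field \<Rightarrow> 'w::ab_group_add \<Rightarrow> 'w) \<Rightarrow> (nat \<Rightarrow> 'v \<Rightarrow> 'v)
    \<Rightarrow> ('v \<Rightarrow> int \<Rightarrow> 'w \<Rightarrow> 'w) \<Rightarrow> (nat \<Rightarrow> 'w \<Rightarrow> 'w) \<Rightarrow> bool" where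
  "conj_Lm sW LmV YW LmW \<longleftrightarrow>
     (\<forall>v N M x. (\<Sum>a\<le>N. sW (of_int ((-1::int)^(N - a))) (LmW a (YW v M (LmW (N - a) x)))) = YW (LmV N v) M x)"

definition H_module_vertex_algebra ::
  "('k::field \<Rightarrow> 'v::ab_group_add \<Rightarrow> 'v) \<Rightarrow> (int \<Rightarrow> 'v set) \<Rightarrow> ('v \<Rightarrow> int \<Rightarrow> 'v \<Rightarrow> 'v) \<Rightarrow> 'v
    \<Rightarrow> (nat \<Rightarrow> 'v \<Rightarrow> 'v) \<Rightarrow> (nat \<Rightarrow> 'v \<Rightarrow> 'v) \<Rightarrow> (nat \<Rightarrow> 'v \<Rightarrow> 'v) \<Rightarrow> bool" where
  "H_module_vertex_algebra s G Y one Lm Lz Lp \<longleftrightarrow>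
     graded_vertex_algebra s G Y one \<and> weight_H_module s G Lm Lz Lp \<and>
     (\<forall>r v. Lm r v = Y v (- int r - 1) one) \<and>
     (\<exists>N. \<forall>n<N. G n = {0}) \<and>
     (\<forall>r. Lp r one = (if r = 0 then one else 0)) \<and>
     conj_L1 s G Lp Y Lp"

definition V_module ::
  "('k::field \<Rightarrow> 'v::ab_group_add \<Rightarrow> 'v) \<Rightarrow> ('v \<Rightarrow> int \<Rightarrow> 'v \<Rightarrow> 'v) \<Rightarrow> 'v
    \<Rightarrow> ('k \<Rightarrow> 'w::ab_group_add \<Rightarrow> 'w) \<Rightarrow> ('v \<Rightarrow> int \<Rightarrow> 'w \<Rightarrow> 'w) \<Rightarrow> bool" where
  "V_module sV Y one sW YW \<longleftrightarrow> vector_space sW \<and>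
     (\<forall>v n. Vector_Spaces.linear sW sW (YW v n)) \<and> (\<forall>n w. Vector_Spaces.linear sV sW (\<lambda>v. YW v n w)) \<and>
     (\<forall>v w. \<exists>N. \<forall>n\<ge>N. YW v n w = 0) \<and>
     (\<forall>w n. YW one n w = (if n = -1 then w else 0)) \<and>
     (\<forall>u v w m n r. borcherds sW Y YW u v w m n r)"

definition VH_module ::
  "('k::field \<Rightarrow> 'v::ab_group_add \<Rightarrow> 'v) \<Rightarrow> (int \<Rightarrow> 'v set) \<Rightarrow> ('v \<Rightarrow> int \<Rightarrow> 'v \<Rightarrow> 'v) \<Rightarrow> 'v
    \<Rightarrow> (nat \<Rightarrow> 'v \<Rightarrow> 'v) \<Rightarrow> (nat \<Rightarrow> 'v \<Rightarrow> 'v)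
    \<Rightarrow> ('k \<Rightarrow> 'w::ab_group_add \<Rightarrow> 'w) \<Rightarrow> (int \<Rightarrow> 'w set) \<Rightarrow> ('v \<Rightarrow> int \<Rightarrow> 'w \<Rightarrow> 'w)
    \<Rightarrow> (nat \<Rightarrow> 'w \<Rightarrow> 'w) \<Rightarrow> (nat \<Rightarrow> 'w \<Rightarrow> 'w) \<Rightarrow> (nat \<Rightarrow> 'w \<Rightarrow> 'w) \<Rightarrow> bool" where
  "VH_module sV GV Y one LmV LpV sW GW YW LmW LzW LpW \<longleftrightarrow>
     weight_H_module sW GW LmW LzW LpW \<and> V_module sV Y one sW YW \<and>
     (\<forall>k n v w (m::int). v \<in> GV k \<longrightarrow> w \<in> GW n \<longrightarrow> YW v m w \<in> GW (k + n - m - 1)) \<and>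
     conj_Lm sW LmV YW LmW \<and> conj_L1 sW GV LpV YW LpW"

definition VH_hom ::
  "('k::field \<Rightarrow> 'v::ab_group_add \<Rightarrow> 'v) \<Rightarrow> ('v \<Rightarrow> int \<Rightarrow> 'v \<Rightarrow> 'v)
    \<Rightarrow> (nat \<Rightarrow> 'v \<Rightarrow> 'v) \<Rightarrow> (nat \<Rightarrow> 'v \<Rightarrow> 'v) \<Rightarrow> (nat \<Rightarrow> 'v \<Rightarrow> 'v)
    \<Rightarrow> ('k \<Rightarrow> 'w::ab_group_add \<Rightarrow> 'w) \<Rightarrow> ('v \<Rightarrow> int \<Rightarrow> 'w \<Rightarrow> 'w)
    \<Rightarrow> (nat \<Rightarrow> 'w \<Rightarrow> 'w) \<Rightarrow> (nat \<Rightarrow> 'w \<Rightarrow> 'w) \<Rightarrow> (nat \<Rightarrow> 'w \<Rightarrow> 'w) \<Rightarrow> ('v \<Rightarrow> 'w) \<Rightarrow> bool" where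
  "VH_hom sV Y LmV LzV LpV sW YW LmW LzW LpW f \<longleftrightarrow>
     Vector_Spaces.linear sV sW f \<and>
     (\<forall>v m u. f (Y v m u) = YW v m (f u)) \<and>
     (\<forall>r u. f (LmV r u) = LmW r (f u) \<and> f (LzV r u) = LzW r (f u) \<and> f (LpV r u) = LpW r (f u))"

end

theory Submission imports Defs "HOL-Computational_Algebra.Primes" begin

lemma prod_real_gchoose:
  fixes a :: int and k :: nat
  shows "real_of_int (\<Prod>i<k. a - int i) = fact k * (real_of_int a gchoose k)"
  by (simp add: gbinomial_prod_rev of_int_prod atLeast0LessThan)

lemma ibinom_eqI:
  assumes "real_of_int a gchoose k = real_of_int N"
  shows "ibinom a k = N"
proof -
  have "real_of_int (\<Prod>i<k. a - int i) = real_of_int (fact k * N)"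
    using prod_real_gchoose[of a k] assms by simp
  hence "(\<Prod>i<k. a - int i) = fact k * N" using of_int_eq_iff by blast
  thus ?thesis unfolding ibinom_def by simp
qed

lemma ibinom_nat: "ibinom (int a) k = int (a choose k)"
  by (rule ibinom_eqI) (simp add: binomial_gbinomial)

lemma ibinom_neg: "ibinom (- int m) k = (-1)^k * int ((m + k - 1) choose k)"
proof (rule ibinom_eqI)
  have c: "real_of_int (- int m) gchoose k = (-1)^k * ((of_nat k - (- real m) - 1) gchoose k)"
    using gbinomial_negated_upper[of "real_of_int (- int m)" k] by simp
  show "real_of_int (- int m) gchoose k = real_of_int ((-1)^k * int ((m + k - 1) choose k))"
  proof (cases "m = 0 \<and> k = 0")
    case True thus ?thesis by simp
  next
    case False
    hence "of_nat k - (- real m) - 1 = real (m + k - 1)" by auto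
    with c show ?thesis by (simp add: binomial_gbinomial)
  qed
qed

lemma prime_pow_dvd_choose:
  assumes p: "prime (p::nat)" and j: "0 < j" "j < p^e"
  shows "p dvd (p^e choose j)"
proof (rule ccontr)
  assume nd: "\<not> p dvd (p^e choose j)"
  obtain j' where jj: "j = Suc j'" using j by (cases j) auto
  obtain q' where qq: "p^e = Suc q'" using j by (cases "p^e") auto
  have "Suc j' * (Suc q' choose Suc j') = Suc q' * (q' choose j')"
    by (rule Suc_times_binomial)
  hence "(p^e choose j) * j = p^e * (q' choose j')" using jj qq by (simp add: mult.commute)
  hence d: "p^e dvd (p^e choose j) * j" by (metis dvd_triv_left)
  have "coprime p (p^e choose j)"
    using nd p by (simp add: prime_imp_coprime)
  hence "coprime (p^e) (p^e choose j)" by simp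
  hence "p^e dvd j" using d coprime_dvd_mult_right_iff by blast
  with j show False using nat_dvd_not_less by blast
qed
lemma choose_pm1:
  fixes dummy :: "'k::field itself"
  assumes p: "prime (CHAR('k))" and j: "j < CHAR('k)^e"
  shows "(of_nat ((CHAR('k)^e - 1) choose j) :: 'k) = (-1)^j"
  using j
proof (induction j)
  case 0 thus ?case by simp
next
  case (Suc j)
  define q where "q = CHAR('k)^e"
  have qpos: "q > 0" using p q_def by (simp add: prime_gt_0_nat)
  have "CHAR('k) dvd (q choose Suc j)"
    using prime_pow_dvd_choose[OF p, of "Suc j" e] Suc.prems q_def by simp
  hence z: "(of_nat (q choose Suc j) :: 'k) = 0" by (simp add: of_nat_eq_0_iff_char_dvd)
  have "q choose Suc j = ((q - 1) choose j) + ((q - 1) choose Suc j)"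
    using qpos by (metis Suc_diff_1 binomial_Suc_Suc)
  hence "(of_nat ((q - 1) choose Suc j) :: 'k) = - of_nat ((q-1) choose j)"
    using z by (metis add.commute add_eq_0_iff of_nat_add)
  with Suc q_def show ?case by simp
qed

lemma exists_r:
  fixes dummy :: "'k::field itself"
  assumes p: "prime (CHAR('k))" and n: "(n::int) \<noteq> 0"
  shows "\<exists>r\<ge>1. (of_int (ibinom (- 2 * n) r) :: 'k) \<noteq> 0"
proof (cases "n < 0")
  case True
  define a where "a = nat (- 2 * n)"
  have a: "int a = - 2 * n" "a \<ge> 1" using True a_def by auto
  have "ibinom (- 2 * n) a = 1" using ibinom_nat[of a a] a(1) by simp
  thus ?thesis using a(2) by (intro exI[of _ a]) simp
next
  case False
  define m where "m = nat (2 * n)"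
  have m: "- int m = - 2 * n" "m \<ge> 1" using False n m_def by auto
  define q where "q = CHAR('k)^m"
  have "2 ^ m \<le> q" unfolding q_def using p prime_ge_2_nat power_mono by blast
  moreover have "m < 2 ^ m" by (rule less_exp)
  ultimately have mq: "m < q" by linarith
  define r where "r = q - m"
  have r: "r \<ge> 1" "m + r - 1 = q - 1" "r < q" using mq m r_def by auto
  have "(of_int (ibinom (- 2 * n) r) :: 'k) = (-1)^r * of_nat ((q - 1) choose r)"
    using ibinom_neg[of m r] m r by simp
  also have "\<dots> = (-1)^r * (-1)^r" using choose_pm1[OF p, of r m] r q_def by simp
  also have "\<dots> \<noteq> 0" by simp
  finally show ?thesis using r by blast
qed
lemma graded_zero_components:
  assumes g: "graded_space s G" and fin: "finite S"
    and cG: "\<And>n. c n \<in> G n" and c0: "\<And>n. n \<notin> S \<Longrightarrow> c n = 0"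
    and sz: "sum c S = 0"
  shows "c n = 0"
proof -
  have sub: "{n. c n \<noteq> 0} \<subseteq> S" using c0 by blast
  have "sum c {n. c n \<noteq> 0} = sum c S"
    by (rule sum.mono_neutral_left[OF fin sub]) auto
  hence s0: "sum c {n. c n \<noteq> 0} = 0" using sz by simp
  note hg = g[unfolded graded_space_def]
  have vs: "vector_space s" using hg by (elim conjE) assumption
  have subs0: "\<forall>n. module.subspace s (G n)" using hg by (elim conjE) assumption
  have uq0: "\<forall>x. \<exists>!c. finite {n. c n \<noteq> 0} \<and> (\<forall>n. c n \<in> G n) \<and> x = sum c {n. c n \<noteq> 0}"
    using hg by (elim conjE) assumption
  define P where "P d \<longleftrightarrow> finite {n. d n \<noteq> 0} \<and> (\<forall>n. d n \<in> G n) \<and> (0::'b) = sum d {n. d n \<noteq> 0}" for d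
  have uq: "\<exists>!d. P d" unfolding P_def using spec[OF uq0, of 0] .
  have subs: "module.subspace s (G m)" for m using subs0 by (rule spec)
  have md: "module s" using vs by (simp add: module_iff_vector_space)
  have z: "(0::'b) \<in> G m" for m using module.subspace_0[OF md subs] .
  have A: "P c" unfolding P_def
    using finite_subset[OF sub fin] cG s0 by auto
  have B: "P (\<lambda>n. 0)" unfolding P_def using z by simp
  have "c = (\<lambda>n. 0)" using uq A B by (metis (no_types) ex1E)
  thus ?thesis by simp
qed

theorem lemma3p13:
  fixes p :: nat
    and sV :: "'k::field \<Rightarrow> 'v::ab_group_add \<Rightarrow> 'v" and GV :: "int \<Rightarrow> 'v set"
    and Y :: "'v \<Rightarrow> int \<Rightarrow> 'v \<Rightarrow> 'v" and one :: 'v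
    and LmV LzV LpV :: "nat \<Rightarrow> 'v \<Rightarrow> 'v"
    and sW :: "'k \<Rightarrow> 'w::ab_group_add \<Rightarrow> 'w" and GW :: "int \<Rightarrow> 'w set"
    and YW :: "'v \<Rightarrow> int \<Rightarrow> 'w \<Rightarrow> 'w"
    and LmW LzW LpW :: "nat \<Rightarrow> 'w \<Rightarrow> 'w"
    and f :: "'v \<Rightarrow> 'w"
  assumes "prime p" and "odd p" and "CHAR('k) = p" and "alg_closed_field TYPE('k)"
    and "H_module_vertex_algebra sV GV Y one LmV LzV LpV"
    and "VH_module sV GV Y one LmV LpV sW GW YW LmW LzW LpW"
    and "VH_hom sV Y LmV LzV LpV sW YW LmW LzW LpW f"
  shows "\<forall>n. f ` GV n \<subseteq> GW n"
proof -
  have pr: "prime (CHAR('k))" using assms(1,3) by simp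
  note h7 = assms(7)[unfolded VH_hom_def]
  have flin: "Vector_Spaces.linear sV sW f" using h7 by (elim conjE) assumption
  have fY0: "\<forall>v m u. f (Y v m u) = YW v m (f u)" using h7 by (elim conjE) assumption
  have fY: "\<And>v m u. f (Y v m u) = YW v m (f u)" using fY0 by blast
  have fL0: "\<forall>r u. f (LmV r u) = LmW r (f u) \<and> f (LzV r u) = LzW r (f u) \<and> f (LpV r u) = LpW r (f u)"
    using h7 by (elim conjE) assumption
  have fLz: "\<And>r u. f (LzV r u) = LzW r (f u)" using fL0 by blast
  note h5 = assms(5)[unfolded H_module_vertex_algebra_def]
  have gva: "graded_vertex_algebra sV GV Y one" using h5 by (elim conjE) assumption
  have wV: "weight_H_module sV GV LmV LzV LpV" using h5 by (elim conjE) assumption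
  note hg = gva[unfolded graded_vertex_algebra_def]
  have va: "vertex_algebra sV Y one" using hg by (elim conjE) assumption
  have one0: "one \<in> GV 0" using hg by (elim conjE) assumption
  note hva = va[unfolded vertex_algebra_def]
  have Yone0: "\<forall>v. Y v (-1) one = v \<and> (\<forall>n\<ge>0. Y v n one = 0)" using hva by (elim conjE) assumption
  have Yone: "\<And>v. Y v (-1) one = v" using Yone0 by blast
  have vsV: "vector_space sV" using hva by (elim conjE) assumption
  note hwV = wV[unfolded weight_H_module_def]
  have LzV0: "\<forall>r n x. x \<in> GV n \<longrightarrow> LmV r x \<in> GV (n + int r) \<and> LpV r x \<in> GV (n - int r) \<and>
                LzV r x = sV (of_int (ibinom (- 2 * (n::int)) r)) x" using hwV by (elim conjE) assumption
  have LzV1: "LzV r one = sV (of_int (ibinom (- 2 * 0) r)) one" for r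
    using LzV0 one0 by blast
  note h6 = assms(6)[unfolded VH_module_def]
  have wW: "weight_H_module sW GW LmW LzW LpW" using h6 by (elim conjE) assumption
  have YWg0: "\<forall>k n v w (m::int). v \<in> GV k \<longrightarrow> w \<in> GW n \<longrightarrow> YW v m w \<in> GW (k + n - m - 1)"
    using h6 by (elim conjE) assumption
  have YWg: "\<And>k n v w (m::int). v \<in> GV k \<Longrightarrow> w \<in> GW n \<Longrightarrow> YW v m w \<in> GW (k + n - m - 1)"
    using YWg0 by blast
  note hwW = wW[unfolded weight_H_module_def]
  have gW: "graded_space sW GW" using hwW by (elim conjE) assumption
  have LzW00: "\<forall>r. Vector_Spaces.linear sW sW (LmW r) \<and> Vector_Spaces.linear sW sW (LzW r) \<and> Vector_Spaces.linear sW sW (LpW r)"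
    using hwW by (elim conjE) assumption
  have LzWlin: "\<And>r. Vector_Spaces.linear sW sW (LzW r)" using LzW00 by blast
  have LzW0: "\<forall>r n x. x \<in> GW n \<longrightarrow> LmW r x \<in> GW (n + int r) \<and> LpW r x \<in> GW (n - int r) \<and>
                LzW r x = sW (of_int (ibinom (- 2 * (n::int)) r)) x" using hwW by (elim conjE) assumption
  have LzWn: "\<And>r n x. x \<in> GW n \<Longrightarrow> LzW r x = sW (of_int (ibinom (- 2 * n) r)) x"
    using LzW0 by blast
  note hgW = gW[unfolded graded_space_def]
  have vsW: "vector_space sW" using hgW by (elim conjE) assumption
  have subW0: "\<forall>n. module.subspace sW (GW n)" using hgW by (elim conjE) assumption
  have subW: "\<And>n. module.subspace sW (GW n)" using subW0 by blast
  have dec0: "\<forall>x. \<exists>!c. finite {n. c n \<noteq> 0} \<and> (\<forall>n. c n \<in> GW n) \<and> x = sum c {n. c n \<noteq> 0}"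
    using hgW by (elim conjE) assumption
  have dec: "\<And>x. \<exists>!c. finite {n. c n \<noteq> 0} \<and> (\<forall>n. c n \<in> GW n) \<and> x = sum c {n. c n \<noteq> 0}"
    using dec0 by blast
  have mW: "module sW" using vsW by (simp add: module_iff_vector_space)
  have mV: "module sV" using vsV by (simp add: module_iff_vector_space)
  have fhom: "module_hom sV sW f" using flin by (simp add: module_hom_iff_linear)
  have kill: "LzW r (f one) = 0" if "r \<ge> 1" for r
  proof -
    have "ibinom 0 r = 0" using ibinom_nat[of 0 r] that by simp
    hence "LzV r one = 0" using LzV1[of r] module.scale_zero_left[OF mV] by simp
    hence "f (LzV r one) = 0" using module_hom.zero[OF fhom] by simp
    thus ?thesis using fLz by simp
  qed
  obtain c where cfin: "finite {n. c n \<noteq> 0}" and cG: "\<And>n. c n \<in> GW n"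
    and xc: "f one = sum c {n. c n \<noteq> 0}"
    using dec[of "f one"] by blast
  define S where "S = {n. c n \<noteq> 0}"
  have cz: "c n = 0" if n0: "n \<noteq> 0" for n
  proof -
    obtain r where r: "r \<ge> 1" "(of_int (ibinom (- 2 * n) r) :: 'k) \<noteq> 0"
      using exists_r[OF pr n0] by blast
    define d where "d m = sW (of_int (ibinom (- 2 * m) r)) (c m)" for m
    have hom: "module_hom sW sW (LzW r)" using LzWlin by (simp add: module_hom_iff_linear)
    have "LzW r (f one) = (\<Sum>m\<in>S. LzW r (c m))"
      using module_hom.sum[OF hom] xc S_def by simp
    also have "\<dots> = sum d S" using LzWn[OF cG] d_def by simp
    finally have sd: "sum d S = 0" using kill[OF r(1)] by simp
    have "d n = 0"
    proof (rule graded_zero_components[OF gW _ _ _ sd])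
      show "finite S" using cfin S_def by simp
      show "d m \<in> GW m" for m unfolding d_def by (rule module.subspace_scale[OF mW subW cG])
      show "d m = 0" if "m \<notin> S" for m using that S_def d_def module.scale_zero_right[OF mW] by simp
    qed
    thus ?thesis using r(2) vector_space.scale_eq_0_iff[OF vsW] d_def by simp
  qed
  have fone: "f one \<in> GW 0"
    unfolding xc
  proof (rule module.subspace_sum[OF mW subW])
    fix n show "c n \<in> GW 0" using cG[of n] cz[of n] module.subspace_0[OF mW subW]
      by (cases "n = 0") auto
  qed
  show ?thesis
  proof (intro allI subsetI)
    fix n y assume "y \<in> f ` GV n"
    then obtain v where v: "v \<in> GV n" "y = f v" by blast
    have "f v = YW v (-1) (f one)" using fY[of v "-1" one] Yone by simp
    also have "\<dots> \<in> GW (n + 0 - (-1) - 1)" by (rule YWg[OF v(1) fone])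
    finally show "y \<in> GW n" using v by simp
  qed
qed

end
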